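(* Let $n\in\mathbb{N}$, and let $\mathcal{H}\in C^1(\mathbb{R}^{n},\mathbb{R})$, $E\in C(\mathbb{R}^{n},\mathbb{R}^{n,n})$ and $z\in C(\mathbb{R}^{n},\mathbb{R}^{n})$ satisfy $E(x)^\top z(x)=\nabla\mathcal{H}(x)$ for all $x\in\mathbb{R}^n$. Assume further that $E(x)$ is symmetric and positive definite for every $x\in\mathbb{R}^n$. Define $\overline{E}\colon\mathbb{R}^n\times\mathbb{R}^n\to\mathbb{R}^{n,n}$ and $\overline{z}\colon\mathbb{R}^n\times\mathbb{R}^n\to\mathbb{R}^n$ by $$\overline{E}(x,\hat x):=E\!\left(\tfrac{\hat x+x}{2}\right),$$ $$\overline{z}(x,\hat x):=\begin{cases} z\!\left(\tfrac{\hat x+x}{2}\right)+\dfrac{\mathcal{H}(\hat x)-\mathcal{H}(x)-z\!\left(\tfrac{\hat x+x}{2}\right)^\top\overline{E}(x,\hat x)(\hat x-x)}{(\hat x-x)^\top\overline{E}(x,\hat x)(\hat x-x)}\,(\hat x-x), & \text{if } \hat x\neq x,\\[2mm] z(x), & \text{otherwise}.\end{cases}$$ Then $(\overline{E},\overline{z})$ is a discrete gradient pair for $(\mathcal{H},E,z)$.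
   Context: Let $\mathcal{H}\in C^1(\mathbb{R}^n,\mathbb{R})$, $E\in C(\mathbb{R}^n,\mathbb{R}^{n,n})$ and $z\in C(\mathbb{R}^n,\mathbb{R}^n)$ satisfy $\nabla\mathcal{H}(x)=E(x)^\top z(x)$ for all $x\in\mathbb{R}^n$. A pair $(\overline{E},\overline{z})\in C(\mathbb{R}^n\times\mathbb{R}^n,\mathbb{R}^{n,n})\times C(\mathbb{R}^n\times\mathbb{R}^n,\mathbb{R}^n)$ (i.e. both maps continuous) is called a discrete gradient pair for $(\mathcal{H},E,z)$ if (i) $\overline{E}(x,x)=E(x)$ for all $x\in\mathbb{R}^n$; (ii) $\overline{z}(x,x)=z(x)$ for all $x\in\mathbb{R}^n$; (iii) $\overline{z}(x,\hat x)^\top\overline{E}(x,\hat x)(\hat x-x)=\mathcal{H}(\hat x)-\mathcal{H}(x)$ for all $(x,\hat x)\in\mathbb{R}^n\times\mathbb{R}^n$. *)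

theory Defs
  imports "HOL-Analysis.Analysis"
begin

definition has_gradient_at :: "(real^'n \<Rightarrow> real) \<Rightarrow> real^'n \<Rightarrow> real^'n \<Rightarrow> bool" where
  "has_gradient_at H g x \<longleftrightarrow> (H has_derivative (\<lambda>h. g \<bullet> h)) (at x)"

definition C1_with_gradient :: "(real^'n \<Rightarrow> real) \<Rightarrow> (real^'n \<Rightarrow> real^'n) \<Rightarrow> bool" where
  "C1_with_gradient H grad \<longleftrightarrow> (\<forall>x. has_gradient_at H (grad x) x) \<and> continuous_on UNIV grad"

definition symmetric_matrix :: "real^'n^'n \<Rightarrow> bool" where
  "symmetric_matrix A \<longleftrightarrow> transpose A = A"

definition pos_def_matrix :: "real^'n^'n \<Rightarrow> bool" where
  "pos_def_matrix A \<longleftrightarrow> (\<forall>v. v \<noteq> 0 \<longrightarrow> v \<bullet> (A *v v) > 0)"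

definition discrete_gradient_pair ::
  "(real^'n \<Rightarrow> real) \<Rightarrow> (real^'n \<Rightarrow> real^'n^'n) \<Rightarrow> (real^'n \<Rightarrow> real^'n)
   \<Rightarrow> (real^'n \<Rightarrow> real^'n \<Rightarrow> real^'n^'n) \<Rightarrow> (real^'n \<Rightarrow> real^'n \<Rightarrow> real^'n) \<Rightarrow> bool" where
  "discrete_gradient_pair H E z Eb zb \<longleftrightarrow>
     continuous_on UNIV (\<lambda>p. Eb (fst p) (snd p)) \<and>
     continuous_on UNIV (\<lambda>p. zb (fst p) (snd p)) \<and>
     (\<forall>x. Eb x x = E x) \<and>
     (\<forall>x. zb x x = z x) \<and>
     (\<forall>x xh. zb x xh \<bullet> (Eb x xh *v (xh - x)) = H xh - H x)"

end

theory Submission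
  imports Defs
begin

lemma cont_mv:
  fixes A :: "'a::topological_space \<Rightarrow> real^'n^'m"
  assumes "continuous_on S A" "continuous_on S v"
  shows "continuous_on S (\<lambda>p. A p *v v p)"
  unfolding matrix_vector_mult_def using assms by (intro continuous_intros) auto

lemma norm_mv_le:
  fixes A :: "real^'n^'m"
  shows "norm (A *v x) \<le> real CARD('m) * real CARD('n) * norm A * norm x"
proof -
  have "\<And>i j. abs (A$i$j) \<le> norm A"
  proof -
    fix i j
    have "abs (A$i$j) \<le> norm (A$i)" by (rule component_le_norm_cart)
    also have "\<dots> \<le> norm A" by (rule Finite_Cartesian_Product.norm_nth_le)
    finally show "abs (A$i$j) \<le> norm A" .
  qed
  then have "onorm ((*v) A) \<le> real CARD('m) * real CARD('n) * norm A"
    by (rule onorm_le_matrix_component)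
  moreover have "norm (A *v x) \<le> onorm ((*v) A) * norm x"
    by (rule onorm) simp
  ultimately show ?thesis by (meson mult_right_mono norm_ge_zero order_trans)
qed

lemma pd_lower:
  fixes A :: "real^'n^'n"
  assumes "pos_def_matrix A"
  shows "\<exists>c>0. \<forall>v. v \<bullet> (A *v v) \<ge> c * (norm v)^2"
proof -
  have "continuous_on (sphere 0 1) (\<lambda>v::real^'n. v \<bullet> (A *v v))"
    by (intro continuous_intros)
  then obtain u where u: "u \<in> sphere 0 1" and umin: "\<forall>y\<in>sphere 0 1. u \<bullet> (A *v u) \<le> y \<bullet> (A *v y)"
    using continuous_attains_inf[of "sphere (0::real^'n) 1"] by fastforce
  have "u \<noteq> 0" using u by auto
  then have cpos: "u \<bullet> (A *v u) > 0" using assms unfolding pos_def_matrix_def by auto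
  show ?thesis
  proof (intro exI[of _ "u \<bullet> (A *v u)"] conjI allI cpos)
    fix v :: "real^'n"
    show "u \<bullet> (A *v u) * (norm v)^2 \<le> v \<bullet> (A *v v)"
    proof (cases "v = 0")
      case True then show ?thesis by simp
    next
      case False
      define w where "w = (1 / norm v) *\<^sub>R v"
      have w: "w \<in> sphere 0 1" using False by (simp add: w_def)
      have vw: "v = norm v *\<^sub>R w" using False by (simp add: w_def)
      have "v \<bullet> (A *v v) = (norm v)^2 * (w \<bullet> (A *v w))"
        by (subst (1 2) vw) (simp add: matrix_vector_mult_scaleR power2_eq_square)
      moreover have "u \<bullet> (A *v u) \<le> w \<bullet> (A *v w)" using umin w by blast
      ultimately show ?thesis by (simp add: mult.commute mult_right_mono)
    qed
  qed
qed


lemma seg_in_ball: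
  fixes x xh x0 :: "'a::real_normed_vector"
  assumes "dist x x0 < r" "dist xh x0 < r" "0 \<le> t" "t \<le> 1"
  shows "dist (x + t *\<^sub>R (xh - x)) x0 < r"
proof -
  have "x + t *\<^sub>R (xh - x) - x0 = (1 - t) *\<^sub>R (x - x0) + t *\<^sub>R (xh - x0)"
    by (simp add: algebra_simps)
  then have "dist (x + t *\<^sub>R (xh - x)) x0 \<le> (1 - t) * dist x x0 + t * dist xh x0"
    using assms by (metis (no_types, lifting) abs_of_nonneg diff_ge_0_iff_ge dist_norm norm_scaleR norm_triangle_ineq)
  also have "\<dots> < r"
  proof (cases "t = 0")
    case True then show ?thesis using assms by simp
  next
    case False
    then have "t * dist xh x0 < t * r" using assms by simp
    moreover have "(1 - t) * dist x x0 \<le> (1 - t) * r" using assms by (intro mult_left_mono) auto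
    ultimately show ?thesis by (simp add: algebra_simps)
  qed
  finally show ?thesis .
qed

theorem theorem1:
  fixes H :: "real^'n \<Rightarrow> real"
    and E :: "real^'n \<Rightarrow> real^'n^'n"
    and z :: "real^'n \<Rightarrow> real^'n"
  assumes H_C1: "C1_with_gradient H (\<lambda>x. transpose (E x) *v z x)"
    and E_cont: "continuous_on UNIV E"
    and z_cont: "continuous_on UNIV z"
    and E_sym: "\<And>x. symmetric_matrix (E x)"
    and E_pd: "\<And>x. pos_def_matrix (E x)"
  shows "discrete_gradient_pair H E z
           (\<lambda>x xh. E ((1/2) *\<^sub>R (xh + x)))
           (\<lambda>x xh. if xh \<noteq> x then
                z ((1/2) *\<^sub>R (xh + x)) +
                ((H xh - H x - z ((1/2) *\<^sub>R (xh + x)) \<bullet> (E ((1/2) *\<^sub>R (xh + x)) *v (xh - x)))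
                  / ((xh - x) \<bullet> (E ((1/2) *\<^sub>R (xh + x)) *v (xh - x)))) *\<^sub>R (xh - x)
              else z x)"
proof -
  define g where "g = (\<lambda>x. transpose (E x) *v z x)"
  have Hd: "\<And>x. (H has_derivative (\<lambda>h. g x \<bullet> h)) (at x)" and gc: "continuous_on UNIV g"
    using H_C1 unfolding C1_with_gradient_def has_gradient_at_def g_def by auto
  have Hc: "continuous_on UNIV H"
    by (metis Hd has_derivative_continuous continuous_at_imp_continuous_on)
  have key: "\<And>y d. z y \<bullet> (E y *v d) = g y \<bullet> d"
    by (simp add: g_def dot_lmul_matrix)
  have pd: "\<And>y d. d \<noteq> 0 \<Longrightarrow> d \<bullet> (E y *v d) > 0"
    using E_pd unfolding pos_def_matrix_def by auto
  define M where "M = (\<lambda>p::(real^'n) \<times> (real^'n). (1/2) *\<^sub>R (snd p + fst p))"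
  define N where "N = (\<lambda>p. H (snd p) - H (fst p) - z (M p) \<bullet> (E (M p) *v (snd p - fst p)))"
  define D where "D = (\<lambda>p. (snd p - fst p) \<bullet> (E (M p) *v (snd p - fst p)))"
  define Eb where "Eb = (\<lambda>x xh::real^'n. E ((1/2) *\<^sub>R (xh + x)))"
  define zb where "zb = (\<lambda>x xh. if xh \<noteq> x then
                z ((1/2) *\<^sub>R (xh + x)) +
                ((H xh - H x - z ((1/2) *\<^sub>R (xh + x)) \<bullet> (E ((1/2) *\<^sub>R (xh + x)) *v (xh - x)))
                  / ((xh - x) \<bullet> (E ((1/2) *\<^sub>R (xh + x)) *v (xh - x)))) *\<^sub>R (xh - x)
              else z x)"
  define C where "C = (\<lambda>p. if snd p \<noteq> fst p then (N p / D p) *\<^sub>R (snd p - fst p) else 0)"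
  have cM: "continuous_on UNIV M" unfolding M_def by (intro continuous_intros)
  have cEM: "continuous_on S (\<lambda>p. E (M p))" for S
    using continuous_on_subset[OF continuous_on_compose2[OF E_cont cM subset_UNIV] subset_UNIV] .
  have czM: "continuous_on S (\<lambda>p. z (M p))" for S
    using continuous_on_subset[OF continuous_on_compose2[OF z_cont cM subset_UNIV] subset_UNIV] .
  have cH1: "continuous_on S (\<lambda>p. H (fst p))" for S :: "((real^'n) \<times> (real^'n)) set"
    by (rule continuous_on_compose2[OF Hc]) (auto intro: continuous_intros)
  have cH2: "continuous_on S (\<lambda>p. H (snd p))" for S :: "((real^'n) \<times> (real^'n)) set"
    by (rule continuous_on_compose2[OF Hc]) (auto intro: continuous_intros)
  have cN: "continuous_on S N" for S
    unfolding N_def by (intro continuous_intros cH1 cH2 czM cont_mv cEM)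
  have cD: "continuous_on S D" for S
    unfolding D_def by (intro continuous_intros cont_mv cEM)
  have Dpos: "D p > 0" if "snd p \<noteq> fst p" for p
    unfolding D_def using pd that by auto
  have Zeq: "(\<lambda>p. zb (fst p) (snd p)) = (\<lambda>p. z (M p) + C p)"
    by (auto simp: zb_def C_def M_def N_def D_def)
  have Mdiag: "M (x, x) = x" for x
    unfolding M_def by (simp add: scaleR_2[symmetric])
  have contC: "isCont C (x0, x0)" for x0
  proof -
    obtain c0 where c0: "c0 > 0" "\<And>v. v \<bullet> (E x0 *v v) \<ge> c0 * (norm v)^2"
      using pd_lower[OF E_pd[of x0]] by blast
    define K where "K = real CARD('n) * real CARD('n)"
    have K: "K > 0" unfolding K_def by simp
    have Kb: "\<And>(A::real^'n^'n) v. norm (A *v v) \<le> K * norm A * norm (v::real^'n)"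
      unfolding K_def by (rule norm_mv_le)
    show ?thesis unfolding continuous_at_eps_delta
    proof (intro allI impI)
      fix e :: real assume e: "e > 0"
      define \<eta> where "\<eta> = e * c0 / 8"
      have \<eta>: "\<eta> > 0" using e c0 by (simp add: \<eta>_def)
      have "\<exists>d>0. \<forall>y. dist y x0 < d \<longrightarrow> dist (g y) (g x0) < \<eta>"
        using gc \<eta> unfolding continuous_on_iff by simp
      then obtain d1 where d1: "d1 > 0" "\<And>y. dist y x0 < d1 \<Longrightarrow> dist (g y) (g x0) < \<eta>"
        by auto
      have cK: "c0 / (2 * K) > 0" using c0 K by simp
      have "\<exists>d>0. \<forall>y. dist y x0 < d \<longrightarrow> dist (E y) (E x0) < c0 / (2 * K)"
        using E_cont cK unfolding continuous_on_iff by simp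
      then obtain d2 where d2: "d2 > 0" "\<And>y. dist y x0 < d2 \<Longrightarrow> dist (E y) (E x0) < c0 / (2 * K)"
        by auto
      show "\<exists>d>0. \<forall>q. dist q (x0, x0) < d \<longrightarrow> dist (C q) (C (x0, x0)) < e"
      proof (intro exI[of _ "min d1 d2"] conjI allI impI)
        show "min d1 d2 > 0" using d1 d2 by simp
        fix q assume q: "dist q (x0, x0) < min d1 d2"
        obtain x xh where qxy: "q = (x, xh)" by (cases q)
        have dx: "dist x x0 < min d1 d2" using q dist_fst_le[of q "(x0,x0)"] qxy by simp
        have dxh: "dist xh x0 < min d1 d2" using q dist_snd_le[of q "(x0,x0)"] qxy by simp
        have seg: "dist (x + t *\<^sub>R (xh - x)) x0 < min d1 d2" if "0 \<le> t" "t \<le> 1" for t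
          using seg_in_ball[OF dx dxh that] .
        define m where "m = M q"
        have m_eq: "m = x + (1/2) *\<^sub>R (xh - x)"
          unfolding m_def M_def qxy by (simp add: vec_eq_iff algebra_simps)
        have dm: "dist m x0 < min d1 d2" using seg[of "1/2"] m_eq by simp
        show "dist (C q) (C (x0, x0)) < e"
        proof (cases "xh = x")
          case True then show ?thesis using e by (simp add: C_def qxy)
        next
          case False
          define d where "d = xh - x"
          have dnz: "d \<noteq> 0" using False by (simp add: d_def)
          have nd: "norm d > 0" using dnz by simp
          have "\<bar>d \<bullet> ((E m - E x0) *v d)\<bar> \<le> norm d * norm ((E m - E x0) *v d)"
            by (rule Cauchy_Schwarz_ineq2)
          also have "\<dots> \<le> norm d * (K * norm (E m - E x0) * norm d)"
            using Kb by (intro mult_left_mono) auto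
          also have "\<dots> \<le> norm d * (K * (c0 / (2 * K)) * norm d)"
            using d2(2)[of m] dm K by (intro mult_left_mono mult_right_mono) (auto simp: dist_norm)
          also have "\<dots> = c0 / 2 * (norm d)^2" using K by (simp add: power2_eq_square)
          finally have pert: "\<bar>d \<bullet> ((E m - E x0) *v d)\<bar> \<le> c0 / 2 * (norm d)^2" .
          have "D q = d \<bullet> (E x0 *v d) + d \<bullet> ((E m - E x0) *v d)"
            unfolding D_def m_def d_def qxy by (simp add: matrix_vector_mult_diff_rdistrib inner_diff_right)
          then have Dlow: "D q \<ge> c0 / 2 * (norm d)^2" using pert c0(2)[of d] by linarith
          have "c0 / 2 * (norm d)^2 > 0" using c0 nd by simp
          then have Dp: "D q > 0" using Dlow by linarith
          define f where "f = (\<lambda>t. H (x + t *\<^sub>R d) - t * (g m \<bullet> d))"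
          define f' where "f' = (\<lambda>t s. g (x + t *\<^sub>R d) \<bullet> (s *\<^sub>R d) - s * (g m \<bullet> d))"
          have fd: "(f has_derivative f' t) (at t)" for t
          proof -
            have "((\<lambda>t. x + t *\<^sub>R d) has_derivative (\<lambda>s. s *\<^sub>R d)) (at t)"
              by (auto intro!: derivative_eq_intros)
            from has_derivative_compose[OF this Hd]
            have "((\<lambda>t. H (x + t *\<^sub>R d)) has_derivative (\<lambda>s. g (x + t *\<^sub>R d) \<bullet> (s *\<^sub>R d))) (at t)" .
            moreover have "((\<lambda>t. t * (g m \<bullet> d)) has_derivative (\<lambda>s. s * (g m \<bullet> d))) (at t)"
              by (auto intro!: derivative_eq_intros)
            ultimately show ?thesis unfolding f_def f'_def by (rule has_derivative_diff)
          qed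
          have fc: "continuous_on {0..1} f"
            using fd by (meson continuous_at_imp_continuous_on has_derivative_continuous)
          obtain t where t: "t \<in> {0<..<1}" "norm (f 1 - f 0) \<le> norm (f' t (1 - 0))"
            using mvt_general[of 0 1 f f', OF _ fc fd] by auto
          have "f 1 - f 0 = N q"
            unfolding f_def N_def qxy d_def using key[of m] m_def qxy by simp
          moreover have "f' t (1 - 0) = (g (x + t *\<^sub>R d) - g m) \<bullet> d"
            unfolding f'_def by (simp add: inner_diff_left)
          ultimately have "\<bar>N q\<bar> \<le> \<bar>(g (x + t *\<^sub>R d) - g m) \<bullet> d\<bar>" using t by simp
          also have "\<dots> \<le> norm (g (x + t *\<^sub>R d) - g m) * norm d"
            by (rule Cauchy_Schwarz_ineq2)
          also have "\<dots> \<le> (2 * \<eta>) * norm d"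
          proof (intro mult_right_mono)
            have "dist (x + t *\<^sub>R d) x0 < d1" using seg[of t] t d_def by auto
            then have a: "dist (g (x + t *\<^sub>R d)) (g x0) < \<eta>" by (rule d1(2))
            have b: "dist (g m) (g x0) < \<eta>" using d1(2) dm by auto
            show "norm (g (x + t *\<^sub>R d) - g m) \<le> 2 * \<eta>"
              proof -
              have "norm (g (x + t *\<^sub>R d) - g m) \<le> norm (g (x + t *\<^sub>R d) - g x0) + norm (g m - g x0)"
                using norm_triangle_ineq4[of "g (x + t *\<^sub>R d) - g x0" "g m - g x0"] by simp
              then show ?thesis using a b unfolding dist_norm by linarith
            qed
          qed simp
          finally have Nb: "\<bar>N q\<bar> \<le> 2 * \<eta> * norm d" .
          have "norm (C q) = \<bar>N q\<bar> / D q * norm d"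
            using False Dp by (simp add: C_def qxy d_def)
          also have "\<dots> \<le> (2 * \<eta> * norm d) / (c0 / 2 * (norm d)^2) * norm d"
            using Nb Dlow Dp nd c0 by (intro mult_right_mono frac_le) auto
          also have "\<dots> = 4 * \<eta> / c0"
            using nd c0 by (simp add: field_simps power2_eq_square)
          also have "\<dots> < e" using e c0 by (simp add: \<eta>_def field_simps)
          finally show ?thesis by (simp add: C_def)
        qed
      qed
    qed
  qed
  have contZ: "continuous_on UNIV (\<lambda>p. zb (fst p) (snd p))"
  proof -
    have "isCont (\<lambda>p. zb (fst p) (snd p)) p" for p
    proof (cases "snd p = fst p")
      case True
      then obtain x0 where p: "p = (x0, x0)" by (metis prod.collapse)
      have "isCont (\<lambda>p. z (M p)) p" using czM[of UNIV] continuous_on_eq_continuous_at[OF open_UNIV] by blast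
      then show ?thesis unfolding Zeq p using contC[of x0] p by (intro continuous_intros) auto
    next
      case False
      define U where "U = {p::(real^'n) \<times> (real^'n). snd p \<noteq> fst p}"
      have oU: "open U" unfolding U_def by (intro open_Collect_neq continuous_intros)
      have "continuous_on U (\<lambda>p. z (M p) + (N p / D p) *\<^sub>R (snd p - fst p))"
        using Dpos unfolding U_def
        by (intro continuous_intros czM cN cD) (auto simp: less_le)
      moreover have "\<And>p. p \<in> U \<Longrightarrow> zb (fst p) (snd p) = z (M p) + (N p / D p) *\<^sub>R (snd p - fst p)"
        unfolding U_def by (auto simp: zb_def M_def N_def D_def)
      ultimately have "continuous_on U (\<lambda>p. zb (fst p) (snd p))"
        by (metis (no_types, lifting) continuous_on_cong)
      moreover have "p \<in> U" using False by (simp add: U_def)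
      ultimately show ?thesis using continuous_on_eq_continuous_at[OF oU] by blast
    qed
    then show ?thesis using continuous_on_eq_continuous_at[OF open_UNIV] by blast
  qed
  have contE: "continuous_on UNIV (\<lambda>p. Eb (fst p) (snd p))"
    unfolding Eb_def using cEM[of UNIV] by (simp add: M_def)
  have ident: "zb x xh \<bullet> (Eb x xh *v (xh - x)) = H xh - H x" for x xh
  proof (cases "xh = x")
    case True then show ?thesis by (simp add: zb_def)
  next
    case False
    define m where "m = (1/2) *\<^sub>R (xh + x)"
    have Dp: "(xh - x) \<bullet> (E m *v (xh - x)) > 0" using pd False by simp
    define Q where "Q = (xh - x) \<bullet> (E m *v (xh - x))"
    define c where "c = (H xh - H x - z m \<bullet> (E m *v (xh - x))) / Q"
    have "zb x xh \<bullet> (Eb x xh *v (xh - x)) = (z m + c *\<^sub>R (xh - x)) \<bullet> (E m *v (xh - x))"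
      using False unfolding zb_def Eb_def m_def[symmetric] c_def Q_def by simp
    also have "\<dots> = z m \<bullet> (E m *v (xh - x)) + c * Q"
      unfolding Q_def by (simp only: inner_add_left inner_scaleR_left)
    also have "\<dots> = H xh - H x" using Dp unfolding c_def Q_def[symmetric] by simp
    finally show ?thesis .
  qed
  have main: "discrete_gradient_pair H E z Eb zb"
  proof -
    have "Eb x x = E x" for x unfolding Eb_def using Mdiag[of x] by (simp add: M_def)
    moreover have "zb x x = z x" for x by (simp add: zb_def)
    ultimately show ?thesis unfolding discrete_gradient_pair_def using contZ contE ident by blast
  qed
  then show ?thesis unfolding Eb_def zb_def .
qed

end
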